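(* Let $X_o$ be a compact Hausdorff space, $\theta$ a homeomorphism of $X_o$ such that $(X_o,\theta)$ is uniquely ergodic with invariant measure $\mu_o$, $f\in C(X_o;\mathbb{T})$, and $\Phi_{\theta,f}(x,w):=(\theta(x),f(x)w)$ acting on $C(X_o\times\mathbb{T})$ by $h\mapsto h\circ\Phi_{\theta,f}$. Suppose $(C(X_o\times\mathbb{T}),\Phi_{\theta,f})$ is uniquely ergodic with respect to the fixed-point subalgebra and that $C(X_o\times\mathbb{T})^{\Phi_{\theta,f}}\ne\mathbb{C}1$; let $\rho:C(X_o\times\mathbb{T})^{\Phi_{\theta,f}}\to C(\mathbb{T})$ be a $*$-isomorphism, and $E^{\Phi_{\theta,f}}$ the unique $\Phi_{\theta,f}$-invariant conditional expectation of $C(X_o\times\mathbb{T})$ onto $C(X_o\times\mathbb{T})^{\Phi_{\theta,f}}$. Then the map $T(\mu):=\mu\circ\rho\circ E^{\Phi_{\theta,f}}$ is an affine bijection from the set $\mathcal{P}(\mathbb{T})$ of regular Borel probability measures on $\mathbb{T}$ (viewed as states on $C(\mathbb{T})$) onto the set of $\Phi_{\theta,f}$-invariant regular Borel probability measures on $X_o\times\mathbb{T}$.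
   Context: A system $(\mathfrak{B},\beta)$ is uniquely ergodic with respect to the fixed-point subalgebra if the Ces\`aro averages $\frac1n\sum_{k=0}^{n-1}\beta^k(x)$ converge in norm for every $x\in\mathfrak{B}$; equivalently every state on $\mathfrak{B}^\beta$ has a unique $\beta$-invariant state extension to $\mathfrak{B}$; in this case the limit defines a $\beta$-invariant conditional expectation onto $\mathfrak{B}^\beta$. Under the hypotheses, the fixed-point subalgebra is $*$-isomorphic to $C(\mathbb{T})$. Measures are identified with states via the Riesz–Markov theorem. *)

theory Defs
  imports "HOL-Analysis.Analysis"
begin

text \<open>C(S): continuous complex functions on S, made canonical by requiring them
  to vanish outside S (so that C(S) is a genuine set of functions).\<close>
definition Cfun :: "'a::topological_space set \<Rightarrow> ('a \<Rightarrow> complex) set" where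
  "Cfun S = {h. continuous_on S h \<and> (\<forall>x. x \<notin> S \<longrightarrow> h x = 0)}"

definition unitS :: "'a set \<Rightarrow> 'a \<Rightarrow> complex" where
  "unitS S = (\<lambda>x. if x \<in> S then 1 else 0)"

text \<open>States on C(S) (= regular Borel probability measures on S by Riesz-Markov);
  canonically extended by 0 off C(S).\<close>
definition is_state :: "'a::topological_space set \<Rightarrow> (('a \<Rightarrow> complex) \<Rightarrow> complex) \<Rightarrow> bool" where
  "is_state S \<phi> \<longleftrightarrow>
     (\<forall>h. h \<notin> Cfun S \<longrightarrow> \<phi> h = 0) \<and>
     (\<forall>h\<in>Cfun S. \<forall>g\<in>Cfun S. \<phi> (\<lambda>x. h x + g x) = \<phi> h + \<phi> g) \<and>
     (\<forall>c. \<forall>h\<in>Cfun S. \<phi> (\<lambda>x. c * h x) = c * \<phi> h) \<and>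
     (\<forall>h\<in>Cfun S. (\<forall>x\<in>S. Im (h x) = 0 \<and> Re (h x) \<ge> 0) \<longrightarrow> Im (\<phi> h) = 0 \<and> Re (\<phi> h) \<ge> 0) \<and>
     \<phi> (unitS S) = 1"

definition koop :: "'a set \<Rightarrow> ('a \<Rightarrow> 'a) \<Rightarrow> ('a \<Rightarrow> complex) \<Rightarrow> 'a \<Rightarrow> complex" where
  "koop S \<Phi> h = (\<lambda>x. if x \<in> S then h (\<Phi> x) else 0)"

definition invariant_state :: "'a::topological_space set \<Rightarrow> ('a \<Rightarrow> 'a) \<Rightarrow> (('a \<Rightarrow> complex) \<Rightarrow> complex) \<Rightarrow> bool" where
  "invariant_state S \<Phi> \<phi> \<longleftrightarrow> is_state S \<phi> \<and> (\<forall>h\<in>Cfun S. \<phi> (koop S \<Phi> h) = \<phi> h)"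

definition uniquely_ergodic :: "'a::topological_space set \<Rightarrow> ('a \<Rightarrow> 'a) \<Rightarrow> bool" where
  "uniquely_ergodic S \<Phi> \<longleftrightarrow> (\<exists>!\<phi>. invariant_state S \<Phi> \<phi>)"

definition fixed_alg :: "'a::topological_space set \<Rightarrow> ('a \<Rightarrow> 'a) \<Rightarrow> ('a \<Rightarrow> complex) set" where
  "fixed_alg S \<Phi> = {h \<in> Cfun S. \<forall>x\<in>S. h (\<Phi> x) = h x}"

definition cesaro :: "'a set \<Rightarrow> ('a \<Rightarrow> 'a) \<Rightarrow> nat \<Rightarrow> ('a \<Rightarrow> complex) \<Rightarrow> 'a \<Rightarrow> complex" where
  "cesaro S \<Phi> n h = (\<lambda>x. if x \<in> S then (\<Sum>k<n. h ((\<Phi> ^^ k) x)) / of_nat n else 0)"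

definition UE_fixed :: "'a::topological_space set \<Rightarrow> ('a \<Rightarrow> 'a) \<Rightarrow> bool" where
  "UE_fixed S \<Phi> \<longleftrightarrow> (\<forall>h\<in>Cfun S. \<exists>g. uniform_limit S (\<lambda>n. cesaro S \<Phi> n h) g sequentially)"

definition cond_exp :: "'a::topological_space set \<Rightarrow> ('a \<Rightarrow> 'a) \<Rightarrow> ('a \<Rightarrow> complex) \<Rightarrow> 'a \<Rightarrow> complex" where
  "cond_exp S \<Phi> h = (THE g. g \<in> Cfun S \<and> uniform_limit S (\<lambda>n. cesaro S \<Phi> n h) g sequentially)"

definition star_iso :: "('a \<Rightarrow> complex) set \<Rightarrow> ('b \<Rightarrow> complex) set \<Rightarrow> (('a \<Rightarrow> complex) \<Rightarrow> ('b \<Rightarrow> complex)) \<Rightarrow> bool" where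
  "star_iso A B \<rho> \<longleftrightarrow> bij_betw \<rho> A B \<and>
     (\<forall>h\<in>A. \<forall>g\<in>A. \<rho> (\<lambda>x. h x + g x) = (\<lambda>y. \<rho> h y + \<rho> g y)) \<and>
     (\<forall>c. \<forall>h\<in>A. \<rho> (\<lambda>x. c * h x) = (\<lambda>y. c * \<rho> h y)) \<and>
     (\<forall>h\<in>A. \<forall>g\<in>A. \<rho> (\<lambda>x. h x * g x) = (\<lambda>y. \<rho> h y * \<rho> g y)) \<and>
     (\<forall>h\<in>A. \<rho> (\<lambda>x. cnj (h x)) = (\<lambda>y. cnj (\<rho> h y)))"

definition affine_states :: "((('a \<Rightarrow> complex) \<Rightarrow> complex) set) \<Rightarrow> ((('a \<Rightarrow> complex) \<Rightarrow> complex) \<Rightarrow> (('b \<Rightarrow> complex) \<Rightarrow> complex)) \<Rightarrow> bool" where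
  "affine_states P T \<longleftrightarrow> (\<forall>\<mu>\<in>P. \<forall>\<nu>\<in>P. \<forall>t::real. 0 \<le> t \<and> t \<le> 1 \<longrightarrow>
      T (\<lambda>h. of_real t * \<mu> h + of_real (1 - t) * \<nu> h) = (\<lambda>h. of_real t * T \<mu> h + of_real (1 - t) * T \<nu> h))"

end

theory Submission
  imports Defs
begin


lemma Cfun_add: "h \<in> Cfun S \<Longrightarrow> g \<in> Cfun S \<Longrightarrow> (\<lambda>x. h x + g x) \<in> Cfun S"
  by (auto simp: Cfun_def intro: continuous_on_add)
lemma Cfun_cmult: "h \<in> Cfun S \<Longrightarrow> (\<lambda>x. c * h x) \<in> Cfun S"
  by (auto simp: Cfun_def intro: continuous_on_mult continuous_on_const)
lemma Cfun_mult: "h \<in> Cfun S \<Longrightarrow> g \<in> Cfun S \<Longrightarrow> (\<lambda>x. h x * g x) \<in> Cfun S"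
  by (auto simp: Cfun_def intro: continuous_on_mult)
lemma Cfun_cnj: "h \<in> Cfun S \<Longrightarrow> (\<lambda>x. cnj (h x)) \<in> Cfun S"
  by (auto simp: Cfun_def intro: continuous_intros)
lemma Cfun_unit: "unitS S \<in> Cfun S"
proof -
  have "continuous_on S (\<lambda>x::'a. 1::complex)" by (rule continuous_on_const)
  then have "continuous_on S (unitS S)" by (rule continuous_on_cong[THEN iffD1, rotated 2]) (auto simp: unitS_def)
  then show ?thesis by (auto simp: Cfun_def unitS_def)
qed
lemma Cfun_zero: "(\<lambda>x. 0) \<in> Cfun S"
  by (auto simp: Cfun_def)
lemma Cfun_Re: "h \<in> Cfun S \<Longrightarrow> (\<lambda>x. complex_of_real (Re (h x))) \<in> Cfun S"
  by (auto simp: Cfun_def intro!: continuous_intros)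
lemma Cfun_Im: "h \<in> Cfun S \<Longrightarrow> (\<lambda>x. complex_of_real (Im (h x))) \<in> Cfun S"
  by (auto simp: Cfun_def intro!: continuous_intros)
lemma Cfun_sqrt: "h \<in> Cfun S \<Longrightarrow> (\<lambda>x. complex_of_real (sqrt (Re (h x)))) \<in> Cfun S"
  by (auto simp: Cfun_def intro!: continuous_intros)
lemma Cfun_bounded: "compact S \<Longrightarrow> h \<in> Cfun S \<Longrightarrow> \<exists>B. \<forall>x\<in>S. norm (h x) \<le> B"
proof -
  assume "compact S" "h \<in> Cfun S"
  then have "compact (h ` S)" by (intro compact_continuous_image) (auto simp: Cfun_def)
  then have "bounded (h ` S)" by (rule compact_imp_bounded)
  then show ?thesis by (auto simp: bounded_iff)
qed

lemma state_add: "is_state S \<phi> \<Longrightarrow> h \<in> Cfun S \<Longrightarrow> g \<in> Cfun S \<Longrightarrow> \<phi> (\<lambda>x. h x + g x) = \<phi> h + \<phi> g"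
  by (simp add: is_state_def)
lemma state_cmult: "is_state S \<phi> \<Longrightarrow> h \<in> Cfun S \<Longrightarrow> \<phi> (\<lambda>x. c * h x) = c * \<phi> h"
  by (simp add: is_state_def)
lemma state_pos: "is_state S \<phi> \<Longrightarrow> h \<in> Cfun S \<Longrightarrow> (\<forall>x\<in>S. Im (h x) = 0 \<and> Re (h x) \<ge> 0) \<Longrightarrow> Im (\<phi> h) = 0 \<and> Re (\<phi> h) \<ge> 0"
  by (simp add: is_state_def)
lemma state_out: "is_state S \<phi> \<Longrightarrow> h \<notin> Cfun S \<Longrightarrow> \<phi> h = 0"
  by (simp add: is_state_def)
lemma state_unit: "is_state S \<phi> \<Longrightarrow> \<phi> (unitS S) = 1"
  by (simp add: is_state_def)

lemma state_zero: "is_state S \<phi> \<Longrightarrow> \<phi> (\<lambda>x. 0) = 0"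
proof -
  assume st: "is_state S \<phi>"
  have "\<phi> (\<lambda>x. 0 * unitS S x) = 0 * \<phi> (unitS S)"
    by (rule state_cmult[OF st Cfun_unit])
  then show ?thesis by simp
qed

lemma state_sum:
  fixes n :: nat
  assumes st: "is_state S \<phi>" and g: "\<And>k. k < n \<Longrightarrow> g k \<in> Cfun S"
  shows "(\<lambda>x. \<Sum>k<n. g k x) \<in> Cfun S \<and> \<phi> (\<lambda>x. \<Sum>k<n. g k x) = (\<Sum>k<n. \<phi> (g k))"
  using g
proof (induction n)
  case 0
  then show ?case using state_zero[OF st] Cfun_zero by simp
next
  case (Suc n)
  then have IH: "(\<lambda>x. \<Sum>k<n. g k x) \<in> Cfun S" "\<phi> (\<lambda>x. \<Sum>k<n. g k x) = (\<Sum>k<n. \<phi> (g k))"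
    and gn: "g n \<in> Cfun S" by auto
  have "\<phi> (\<lambda>x. (\<Sum>k<n. g k x) + g n x) = \<phi> (\<lambda>x. \<Sum>k<n. g k x) + \<phi> (g n)"
    using state_add[OF st IH(1) gn] by simp
  then show ?case using IH gn Cfun_add[OF IH(1) gn] by simp
qed

lemma real_bound:
  assumes st: "is_state S \<phi>" and a: "a \<in> Cfun S"
    and b: "\<forall>x\<in>S. Im (a x) = 0 \<and> \<bar>Re (a x)\<bar> \<le> B"
  shows "Im (\<phi> a) = 0 \<and> \<bar>Re (\<phi> a)\<bar> \<le> B"
proof -
  have u: "(\<lambda>x. complex_of_real B * unitS S x) \<in> Cfun S" by (rule Cfun_cmult[OF Cfun_unit])
  have "\<phi> (\<lambda>x. complex_of_real B * unitS S x) = complex_of_real B * \<phi> (unitS S)"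
    by (rule state_cmult[OF st Cfun_unit])
  then have phiu: "\<phi> (\<lambda>x. complex_of_real B * unitS S x) = complex_of_real B"
    using state_unit[OF st] by simp
  have ma: "(\<lambda>x. (-1) * a x) \<in> Cfun S" by (rule Cfun_cmult[OF a])
  have phima: "\<phi> (\<lambda>x. (-1) * a x) = - \<phi> a"
    using state_cmult[OF st a, of "-1"] by simp
  have p1: "\<phi> (\<lambda>x. complex_of_real B * unitS S x + a x) = complex_of_real B + \<phi> a"
    using state_add[OF st u a] phiu by simp
  have p2: "\<phi> (\<lambda>x. complex_of_real B * unitS S x + (-1) * a x) = complex_of_real B - \<phi> a"
    using state_add[OF st u ma] phiu phima by simp
  have n1: "Im (\<phi> (\<lambda>x. complex_of_real B * unitS S x + a x)) = 0 \<and> Re (\<phi> (\<lambda>x. complex_of_real B * unitS S x + a x)) \<ge> 0"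
    using b by (intro state_pos[OF st Cfun_add[OF u a]]) (auto simp: unitS_def)
  have n2: "Im (\<phi> (\<lambda>x. complex_of_real B * unitS S x + (-1) * a x)) = 0 \<and> Re (\<phi> (\<lambda>x. complex_of_real B * unitS S x + (-1) * a x)) \<ge> 0"
    using b by (intro state_pos[OF st Cfun_add[OF u ma]]) (auto simp: unitS_def)
  show ?thesis using n1 n2 unfolding p1 p2 by auto
qed

lemma state_bound:
  assumes st: "is_state S \<phi>" and k: "k \<in> Cfun S" and b: "\<forall>x\<in>S. norm (k x) \<le> B"
  shows "norm (\<phi> k) \<le> 2 * B"
proof -
  define a where "a = (\<lambda>x. complex_of_real (Re (k x)))"
  define c where "c = (\<lambda>x. complex_of_real (Im (k x)))"
  have a: "a \<in> Cfun S" and c: "c \<in> Cfun S" using Cfun_Re[OF k] Cfun_Im[OF k] by (auto simp: a_def c_def)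
  have ic: "(\<lambda>x. \<i> * c x) \<in> Cfun S" by (rule Cfun_cmult[OF c])
  have keq: "k = (\<lambda>x. a x + \<i> * c x)" by (auto simp: a_def c_def complex_eq_iff)
  have "\<phi> k = \<phi> a + \<i> * \<phi> c"
    using state_add[OF st a ic] state_cmult[OF st c] by (subst keq) simp
  moreover have "\<forall>x\<in>S. Im (a x) = 0 \<and> \<bar>Re (a x)\<bar> \<le> B"
    using b abs_Re_le_cmod by (auto simp: a_def intro: order_trans)
  then have ra: "Im (\<phi> a) = 0 \<and> \<bar>Re (\<phi> a)\<bar> \<le> B" by (rule real_bound[OF st a])
  moreover have "\<forall>x\<in>S. Im (c x) = 0 \<and> \<bar>Re (c x)\<bar> \<le> B"
    using b abs_Im_le_cmod by (auto simp: c_def intro: order_trans)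
  then have rc: "Im (\<phi> c) = 0 \<and> \<bar>Re (\<phi> c)\<bar> \<le> B" by (rule real_bound[OF st c])
  ultimately have "norm (\<phi> k) \<le> norm (\<phi> a) + norm (\<i> * \<phi> c)" using norm_triangle_ineq by simp
  also have "norm (\<phi> a) = \<bar>Re (\<phi> a)\<bar>" using ra by (simp add: cmod_eq_Re)
  also have "norm (\<i> * \<phi> c) = \<bar>Re (\<phi> c)\<bar>" using rc by (simp add: norm_mult cmod_eq_Re)
  finally show ?thesis using ra rc by linarith
qed




locale erg =
  fixes S :: "'b::topological_space set" and \<Phi> :: "'b \<Rightarrow> 'b"
  assumes cpt: "compact S" and contP: "continuous_on S \<Phi>" and invS: "\<And>x. x \<in> S \<Longrightarrow> \<Phi> x \<in> S"
    and uef: "UE_fixed S \<Phi>"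
begin

lemma funpow_in: "x \<in> S \<Longrightarrow> (\<Phi> ^^ k) x \<in> S"
  by (induction k) (auto intro: invS)

lemma cont_funpow: "continuous_on S (\<Phi> ^^ k)"
proof (induction k)
  case 0 then show ?case by (simp add: continuous_on_id)
next
  case (Suc k)
  have "continuous_on S (\<Phi> \<circ> (\<Phi> ^^ k))"
    by (rule continuous_on_compose[OF Suc]) (rule continuous_on_subset[OF contP], auto intro: funpow_in)
  then show ?case by simp
qed

lemma Cfun_comp_funpow: "h \<in> Cfun S \<Longrightarrow> continuous_on S (\<lambda>x. h ((\<Phi> ^^ k) x))"
  by (rule continuous_on_compose2[of S h _ "\<Phi> ^^ k"]) (auto simp: Cfun_def cont_funpow funpow_in)

lemma cesaro_Cfun: "h \<in> Cfun S \<Longrightarrow> cesaro S \<Phi> n h \<in> Cfun S"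
proof -
  assume h: "h \<in> Cfun S"
  have "continuous_on S (\<lambda>x. (\<Sum>k<n. h ((\<Phi> ^^ k) x)) * inverse (of_nat n))"
    by (intro continuous_intros Cfun_comp_funpow[OF h])
  then have "continuous_on S (cesaro S \<Phi> n h)"
    by (rule continuous_on_cong[THEN iffD1, rotated 2]) (auto simp: cesaro_def divide_inverse)
  then show ?thesis by (auto simp: Cfun_def cesaro_def)
qed

lemma koop_Cfun: "h \<in> Cfun S \<Longrightarrow> koop S \<Phi> h \<in> Cfun S"
proof -
  assume h: "h \<in> Cfun S"
  have "continuous_on S (\<lambda>x. h (\<Phi> x))"
    by (rule continuous_on_compose2[of S h _ \<Phi>]) (use h contP invS in \<open>auto simp: Cfun_def\<close>)
  then have "continuous_on S (koop S \<Phi> h)"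
    by (rule continuous_on_cong[THEN iffD1, rotated 2]) (auto simp: koop_def)
  then show ?thesis by (auto simp: Cfun_def koop_def)
qed

lemma ulim_unique:
  assumes "uniform_limit S F g1 sequentially" "uniform_limit S F g2 sequentially"
    "g1 \<in> Cfun S" "g2 \<in> Cfun S"
  shows "g1 = g2"
proof
  fix x show "g1 x = g2 x"
  proof (cases "x \<in> S")
    case True
    show ?thesis using tendsto_uniform_limitI[OF assms(1) True] tendsto_uniform_limitI[OF assms(2) True]
      by (rule LIMSEQ_unique)
  next
    case False then show ?thesis using assms(3,4) by (auto simp: Cfun_def)
  qed
qed

lemma E_char:
  assumes h: "h \<in> Cfun S"
  shows "cond_exp S \<Phi> h \<in> Cfun S \<and> uniform_limit S (\<lambda>n. cesaro S \<Phi> n h) (cond_exp S \<Phi> h) sequentially"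
proof -
  obtain g where g: "uniform_limit S (\<lambda>n. cesaro S \<Phi> n h) g sequentially"
    using uef h unfolding UE_fixed_def by blast
  define g' where "g' = (\<lambda>x. if x \<in> S then g x else 0)"
  have g': "uniform_limit S (\<lambda>n. cesaro S \<Phi> n h) g' sequentially"
    using g by (rule uniform_limit_cong'[THEN iffD1, rotated 2]) (auto simp: g'_def)
  have "continuous_on S g'"
    by (rule uniform_limit_theorem[OF _ g']) (use cesaro_Cfun[OF h] in \<open>auto simp: Cfun_def\<close>)
  then have gC: "g' \<in> Cfun S" by (auto simp: Cfun_def g'_def)
  show ?thesis unfolding cond_exp_def
    by (rule theI2[of _ g']) (use gC g' ulim_unique in blast)+
qed

lemma E_Cfun: "h \<in> Cfun S \<Longrightarrow> cond_exp S \<Phi> h \<in> Cfun S"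
  using E_char by blast
lemma E_lim: "h \<in> Cfun S \<Longrightarrow> uniform_limit S (\<lambda>n. cesaro S \<Phi> n h) (cond_exp S \<Phi> h) sequentially"
  using E_char by blast

lemma E_eq: "h \<in> Cfun S \<Longrightarrow> g \<in> Cfun S \<Longrightarrow> uniform_limit S (\<lambda>n. cesaro S \<Phi> n h) g sequentially \<Longrightarrow> cond_exp S \<Phi> h = g"
  using E_char ulim_unique by blast

lemma cesaro_add: "cesaro S \<Phi> n (\<lambda>x. h x + g x) = (\<lambda>x. cesaro S \<Phi> n h x + cesaro S \<Phi> n g x)"
  by (auto simp: cesaro_def sum.distrib add_divide_distrib)
lemma cesaro_cmult: "cesaro S \<Phi> n (\<lambda>x. c * h x) = (\<lambda>x. c * cesaro S \<Phi> n h x)"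
  by (auto simp: cesaro_def sum_distrib_left)

lemma E_add: "h \<in> Cfun S \<Longrightarrow> g \<in> Cfun S \<Longrightarrow> cond_exp S \<Phi> (\<lambda>x. h x + g x) = (\<lambda>x. cond_exp S \<Phi> h x + cond_exp S \<Phi> g x)"
  by (rule E_eq) (auto simp: cesaro_add intro!: Cfun_add E_Cfun uniform_limit_add E_lim)

lemma E_cmult: "h \<in> Cfun S \<Longrightarrow> cond_exp S \<Phi> (\<lambda>x. c * h x) = (\<lambda>x. c * cond_exp S \<Phi> h x)"
proof (rule E_eq)
  assume h: "h \<in> Cfun S"
  show "uniform_limit S (\<lambda>n. cesaro S \<Phi> n (\<lambda>x. c * h x)) (\<lambda>x. c * cond_exp S \<Phi> h x) sequentially"
    unfolding cesaro_cmult
    by (rule bounded_linear.uniform_limit[OF bounded_linear_mult_right E_lim[OF h]])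
qed (auto intro!: Cfun_cmult E_Cfun)

lemma fixed_iter: "h \<in> fixed_alg S \<Phi> \<Longrightarrow> x \<in> S \<Longrightarrow> h ((\<Phi> ^^ k) x) = h x"
proof (induction k)
  case (Suc k)
  then show ?case using funpow_in[of x k] by (auto simp: fixed_alg_def)
qed simp

lemma E_fix: assumes h: "h \<in> fixed_alg S \<Phi>" shows "cond_exp S \<Phi> h = h"
proof (rule E_eq)
  show hC: "h \<in> Cfun S" using h by (simp add: fixed_alg_def)
  show "uniform_limit S (\<lambda>n. cesaro S \<Phi> n h) h sequentially"
  proof (rule uniform_limitI)
    fix e :: real assume e: "0 < e"
    have "\<forall>n\<ge>1. \<forall>x\<in>S. dist (cesaro S \<Phi> n h x) (h x) < e"
      using e by (auto simp: cesaro_def fixed_iter[OF h])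
    then show "\<forall>\<^sub>F n in sequentially. \<forall>x\<in>S. dist (cesaro S \<Phi> n h x) (h x) < e"
      unfolding eventually_sequentially by blast
  qed
qed (use h in \<open>simp add: fixed_alg_def\<close>)

lemma sum_koop: "x \<in> S \<Longrightarrow> (\<Sum>k<n. koop S \<Phi> h ((\<Phi> ^^ k) x)) = (\<Sum>k<n. h ((\<Phi> ^^ k) x)) + h ((\<Phi> ^^ n) x) - h x"
proof (induction n)
  case (Suc n)
  then show ?case using funpow_in[of x n] by (simp add: koop_def)
qed simp

lemma cesaro_koop: "x \<in> S \<Longrightarrow> cesaro S \<Phi> n (koop S \<Phi> h) x = cesaro S \<Phi> n h x + (h ((\<Phi> ^^ n) x) - h x) / of_nat n"
  by (simp add: cesaro_def sum_koop add_divide_distrib diff_divide_distrib)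

lemma E_koop: assumes h: "h \<in> Cfun S" shows "cond_exp S \<Phi> (koop S \<Phi> h) = cond_exp S \<Phi> h"
proof (rule E_eq)
  show "koop S \<Phi> h \<in> Cfun S" by (rule koop_Cfun[OF h])
  show "cond_exp S \<Phi> h \<in> Cfun S" by (rule E_Cfun[OF h])
  obtain B0 where B0: "\<forall>x\<in>S. norm (h x) \<le> B0" using Cfun_bounded[OF cpt h] by blast
  define B where "B = max B0 0"
  have B: "\<forall>x\<in>S. norm (h x) \<le> B" using B0 by (auto simp: B_def)
  show "uniform_limit S (\<lambda>n. cesaro S \<Phi> n (koop S \<Phi> h)) (cond_exp S \<Phi> h) sequentially"
  proof (rule uniform_limitI)
    fix e :: real assume e: "0 < e"
    have ev1: "\<forall>\<^sub>F n in sequentially. \<forall>x\<in>S. dist (cesaro S \<Phi> n h x) (cond_exp S \<Phi> h x) < e/2"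
      using uniform_limitD[OF E_lim[OF h], of "e/2"] e by simp
    have "(\<lambda>n. (2*B) / of_nat n) \<longlonglongrightarrow> (0::real)" by (rule lim_const_over_n)
    then have ev2: "\<forall>\<^sub>F n in sequentially. (2*B) / real n < e/2"
      using e by (intro order_tendstoD(2)) auto
    from ev1 ev2 show "\<forall>\<^sub>F n in sequentially. \<forall>x\<in>S. dist (cesaro S \<Phi> n (koop S \<Phi> h) x) (cond_exp S \<Phi> h x) < e"
    proof eventually_elim
      case (elim n)
      show ?case
      proof
        fix x assume x: "x \<in> S"
        have "norm (h ((\<Phi> ^^ n) x) - h x) \<le> 2 * B"
        proof -
          have "norm (h ((\<Phi> ^^ n) x)) \<le> B" "norm (h x) \<le> B" using B x funpow_in[OF x, of n] by auto
          then show ?thesis using norm_triangle_ineq4[of "h ((\<Phi> ^^ n) x)" "h x"] by linarith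
        qed
        then have d: "norm ((h ((\<Phi> ^^ n) x) - h x) / of_nat n) \<le> 2 * B / real n"
          by (simp add: norm_divide divide_right_mono)
        have "dist (cesaro S \<Phi> n (koop S \<Phi> h) x) (cond_exp S \<Phi> h x)
              \<le> dist (cesaro S \<Phi> n h x) (cond_exp S \<Phi> h x) + norm ((h ((\<Phi> ^^ n) x) - h x) / of_nat n)"
          unfolding cesaro_koop[OF x] dist_norm
          by (metis (no_types, lifting) add.commute add_diff_eq norm_triangle_ineq4 diff_diff_eq2 norm_triangle_ineq)
        then show "dist (cesaro S \<Phi> n (koop S \<Phi> h) x) (cond_exp S \<Phi> h x) < e"
          using d elim x by fastforce
      qed
    qed
  qed
qed

lemma cesaro_shift: "x \<in> S \<Longrightarrow> cesaro S \<Phi> n h (\<Phi> x) = cesaro S \<Phi> n (koop S \<Phi> h) x"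
  using invS[of x] funpow_in[of x] by (simp add: cesaro_def koop_def funpow_swap1)

lemma E_inv: assumes h: "h \<in> Cfun S" and x: "x \<in> S" shows "cond_exp S \<Phi> h (\<Phi> x) = cond_exp S \<Phi> h x"
proof -
  have l1: "(\<lambda>n. cesaro S \<Phi> n h (\<Phi> x)) \<longlonglongrightarrow> cond_exp S \<Phi> h (\<Phi> x)"
    using tendsto_uniform_limitI[OF E_lim[OF h] invS[OF x]] .
  have l2: "(\<lambda>n. cesaro S \<Phi> n (koop S \<Phi> h) x) \<longlonglongrightarrow> cond_exp S \<Phi> h x"
    using tendsto_uniform_limitI[OF E_lim[OF koop_Cfun[OF h]] x] E_koop[OF h] by simp
  show ?thesis using l1 l2 cesaro_shift[OF x] by (simp add: LIMSEQ_unique)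
qed

lemma E_fixed: "h \<in> Cfun S \<Longrightarrow> cond_exp S \<Phi> h \<in> fixed_alg S \<Phi>"
  using E_Cfun E_inv by (auto simp: fixed_alg_def)

lemma E_pos:
  assumes h: "h \<in> Cfun S" and p: "\<forall>x\<in>S. Im (h x) = 0 \<and> Re (h x) \<ge> 0" and x: "x \<in> S"
  shows "Im (cond_exp S \<Phi> h x) = 0 \<and> Re (cond_exp S \<Phi> h x) \<ge> 0"
proof -
  have l: "(\<lambda>n. cesaro S \<Phi> n h x) \<longlonglongrightarrow> cond_exp S \<Phi> h x"
    using tendsto_uniform_limitI[OF E_lim[OF h] x] .
  have im: "\<And>n. Im (cesaro S \<Phi> n h x) = 0" and re: "\<And>n. Re (cesaro S \<Phi> n h x) \<ge> 0"
    using p x funpow_in[OF x] by (auto simp: cesaro_def intro!: sum_nonneg divide_nonneg_nonneg)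
  have "(\<lambda>n. Im (cesaro S \<Phi> n h x)) \<longlonglongrightarrow> Im (cond_exp S \<Phi> h x)" by (rule tendsto_Im[OF l])
  then have "(\<lambda>n. 0::real) \<longlonglongrightarrow> Im (cond_exp S \<Phi> h x)" by (simp add: im)
  then have 1: "Im (cond_exp S \<Phi> h x) = 0" using LIMSEQ_unique tendsto_const by blast
  have "(\<lambda>n. Re (cesaro S \<Phi> n h x)) \<longlonglongrightarrow> Re (cond_exp S \<Phi> h x)" by (rule tendsto_Re[OF l])
  then have 2: "Re (cond_exp S \<Phi> h x) \<ge> 0" using re by (intro LIMSEQ_le_const) auto
  show ?thesis using 1 2 by simp
qed

lemma E_unit: "cond_exp S \<Phi> (unitS S) = unitS S"
  by (rule E_fix) (use Cfun_unit[of S] invS in \<open>simp add: fixed_alg_def unitS_def\<close>)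

lemma state_cesaro:
  assumes st: "invariant_state S \<Phi> \<phi>" and h: "h \<in> Cfun S" and n: "n > 0"
  shows "\<phi> (cesaro S \<Phi> n h) = \<phi> h"
proof -
  have st': "is_state S \<phi>" using st by (simp add: invariant_state_def)
  define kit where "kit k = (\<lambda>x. if x \<in> S then h ((\<Phi> ^^ k) x) else 0)" for k
  have kitC: "kit k \<in> Cfun S \<and> \<phi> (kit k) = \<phi> h" for k
  proof (induction k)
    case 0
    have "kit 0 = h" using h by (auto simp: kit_def Cfun_def)
    then show ?case using h by simp
  next
    case (Suc k)
    have "kit (Suc k) = koop S \<Phi> (kit k)"
      using invS by (auto simp: kit_def koop_def funpow_swap1)
    then show ?case using Suc koop_Cfun st by (auto simp: invariant_state_def)
  qed
  have ce: "cesaro S \<Phi> n h = (\<lambda>x. (1 / of_nat n) * (\<Sum>k<n. kit k x))"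
    by (auto simp: cesaro_def kit_def)
  have ss: "(\<lambda>x. \<Sum>k<n. kit k x) \<in> Cfun S \<and> \<phi> (\<lambda>x. \<Sum>k<n. kit k x) = (\<Sum>k<n. \<phi> (kit k))"
    by (rule state_sum[OF st']) (use kitC in blast)
  show ?thesis unfolding ce state_cmult[OF st' ss[THEN conjunct1]] using ss kitC n by simp
qed

lemma E_state:
  assumes st: "invariant_state S \<Phi> \<phi>" and h: "h \<in> Cfun S"
  shows "\<phi> (cond_exp S \<Phi> h) = \<phi> h"
proof -
  have st': "is_state S \<phi>" using st by (simp add: invariant_state_def)
  define d where "d = \<phi> (cond_exp S \<Phi> h) - \<phi> h"
  have bound: "norm d \<le> 2 * e" if e: "e > 0" for e
  proof -
    obtain N where N: "\<forall>n\<ge>N. \<forall>x\<in>S. dist (cesaro S \<Phi> n h x) (cond_exp S \<Phi> h x) < e"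
      using uniform_limitD[OF E_lim[OF h] e] unfolding eventually_sequentially by blast
    define n where "n = Suc N"
    have n: "n > 0" "\<forall>x\<in>S. dist (cesaro S \<Phi> n h x) (cond_exp S \<Phi> h x) < e"
      using N by (auto simp: n_def)
    define D where "D = (\<lambda>x. cond_exp S \<Phi> h x + (-1) * cesaro S \<Phi> n h x)"
    have cC: "cesaro S \<Phi> n h \<in> Cfun S" by (rule cesaro_Cfun[OF h])
    have mC: "(\<lambda>x. (-1) * cesaro S \<Phi> n h x) \<in> Cfun S" by (rule Cfun_cmult[OF cC])
    have DC: "D \<in> Cfun S" unfolding D_def by (rule Cfun_add[OF E_Cfun[OF h] mC])
    have "\<phi> D = \<phi> (cond_exp S \<Phi> h) + (-1) * \<phi> (cesaro S \<Phi> n h)"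
      unfolding D_def state_add[OF st' E_Cfun[OF h] mC] state_cmult[OF st' cC] ..
    then have "\<phi> D = d" using state_cesaro[OF st h n(1)] by (simp add: d_def)
    moreover have "\<forall>x\<in>S. norm (D x) \<le> e"
      using n(2) by (auto simp: D_def dist_norm norm_minus_commute less_imp_le)
    ultimately show ?thesis using state_bound[OF st' DC] by simp
  qed
  have "d = 0"
  proof (rule ccontr)
    assume "d \<noteq> 0"
    then have "norm d > 0" by simp
    then show False using bound[of "norm d / 4"] by simp
  qed
  then show ?thesis by (simp add: d_def)
qed

end



lemma sqrt_cnj: "Im z = 0 \<Longrightarrow> Re z \<ge> 0 \<Longrightarrow> complex_of_real (sqrt (Re z)) * cnj (complex_of_real (sqrt (Re z))) = z"
  by (simp add: complex_eq_iff)

lemma Cfun_sq_decomp: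
  assumes h: "h \<in> Cfun S" and p: "\<forall>x\<in>S. Im (h x) = 0 \<and> Re (h x) \<ge> 0"
  shows "h = (\<lambda>x. complex_of_real (sqrt (Re (h x))) * cnj (complex_of_real (sqrt (Re (h x)))))"
proof
  fix x show "h x = complex_of_real (sqrt (Re (h x))) * cnj (complex_of_real (sqrt (Re (h x))))"
    using h p sqrt_cnj[of "h x"] by (cases "x \<in> S") (auto simp: Cfun_def)
qed

lemma mult_cnj_pos: "Im (z * cnj z) = 0 \<and> Re (z * cnj z) \<ge> 0"
  by (simp add: complex_mult_cnj)

locale erg_iso = erg S \<Phi> for S :: "'b::topological_space set" and \<Phi> +
  fixes Tsp :: "'c::topological_space set" and \<rho> :: "('b \<Rightarrow> complex) \<Rightarrow> ('c \<Rightarrow> complex)"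
  assumes iso: "star_iso (fixed_alg S \<Phi>) (Cfun Tsp) \<rho>"
begin

abbreviation "A \<equiv> fixed_alg S \<Phi>"

lemma fa_Cfun: "h \<in> A \<Longrightarrow> h \<in> Cfun S" by (simp add: fixed_alg_def)
lemma fa_add: "h \<in> A \<Longrightarrow> g \<in> A \<Longrightarrow> (\<lambda>x. h x + g x) \<in> A"
  by (auto simp: fixed_alg_def Cfun_add)
lemma fa_cmult: "h \<in> A \<Longrightarrow> (\<lambda>x. c * h x) \<in> A"
  by (auto simp: fixed_alg_def Cfun_cmult)
lemma fa_mult: "h \<in> A \<Longrightarrow> g \<in> A \<Longrightarrow> (\<lambda>x. h x * g x) \<in> A"
  by (auto simp: fixed_alg_def Cfun_mult)
lemma fa_cnj: "h \<in> A \<Longrightarrow> (\<lambda>x. cnj (h x)) \<in> A"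
  by (auto simp: fixed_alg_def Cfun_cnj)
lemma fa_sqrt: "h \<in> A \<Longrightarrow> (\<lambda>x. complex_of_real (sqrt (Re (h x)))) \<in> A"
  by (auto simp: fixed_alg_def Cfun_sqrt)
lemma fa_unit: "unitS S \<in> A"
  using Cfun_unit[of S] invS by (simp add: fixed_alg_def unitS_def)

lemma rho_bij: "bij_betw \<rho> A (Cfun Tsp)" using iso by (simp add: star_iso_def)
lemma rho_in: "h \<in> A \<Longrightarrow> \<rho> h \<in> Cfun Tsp" by (rule bij_betw_apply[OF rho_bij])
lemma rho_add: "h \<in> A \<Longrightarrow> g \<in> A \<Longrightarrow> \<rho> (\<lambda>x. h x + g x) = (\<lambda>y. \<rho> h y + \<rho> g y)"
  using iso by (simp add: star_iso_def)
lemma rho_cmult: "h \<in> A \<Longrightarrow> \<rho> (\<lambda>x. c * h x) = (\<lambda>y. c * \<rho> h y)"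
  using iso by (simp add: star_iso_def)
lemma rho_mult: "h \<in> A \<Longrightarrow> g \<in> A \<Longrightarrow> \<rho> (\<lambda>x. h x * g x) = (\<lambda>y. \<rho> h y * \<rho> g y)"
  using iso by (simp add: star_iso_def)
lemma rho_cnj: "h \<in> A \<Longrightarrow> \<rho> (\<lambda>x. cnj (h x)) = (\<lambda>y. cnj (\<rho> h y))"
  using iso by (simp add: star_iso_def)

definition rinv where "rinv = inv_into A \<rho>"

lemma rinv_in: "g \<in> Cfun Tsp \<Longrightarrow> rinv g \<in> A"
  unfolding rinv_def by (rule bij_betw_apply[OF bij_betw_inv_into[OF rho_bij]])
lemma rho_rinv: "g \<in> Cfun Tsp \<Longrightarrow> \<rho> (rinv g) = g"
  unfolding rinv_def by (rule f_inv_into_f[where A=A]) (simp add: bij_betw_imp_surj_on[OF rho_bij])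
lemma rinv_rho: "h \<in> A \<Longrightarrow> rinv (\<rho> h) = h"
  unfolding rinv_def by (rule inv_into_f_f[OF bij_betw_imp_inj_on[OF rho_bij]])
lemma rinv_eq: "k \<in> A \<Longrightarrow> \<rho> k = g \<Longrightarrow> rinv g = k"
  using rinv_rho by blast

lemma rho_pos:
  assumes h: "h \<in> A" and p: "\<forall>x\<in>S. Im (h x) = 0 \<and> Re (h x) \<ge> 0"
  shows "Im (\<rho> h y) = 0 \<and> Re (\<rho> h y) \<ge> 0"
proof -
  define sk where "sk = (\<lambda>x. complex_of_real (sqrt (Re (h x))))"
  have skA: "sk \<in> A" unfolding sk_def by (rule fa_sqrt[OF h])
  have "h = (\<lambda>x. sk x * cnj (sk x))" unfolding sk_def by (rule Cfun_sq_decomp[OF fa_Cfun[OF h] p])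
  then have "\<rho> h = (\<lambda>y. \<rho> sk y * cnj (\<rho> sk y))"
    using rho_mult[OF skA fa_cnj[OF skA]] rho_cnj[OF skA] by simp
  then show ?thesis using mult_cnj_pos by simp
qed

lemma rho_unit: "\<rho> (unitS S) = unitS Tsp"
proof -
  obtain g where g: "g \<in> A" "\<rho> g = unitS Tsp"
    using bij_betw_imp_surj_on[OF rho_bij] Cfun_unit[of Tsp] by (metis imageE)
  have "(\<lambda>x. unitS S x * g x) = g"
    using fa_Cfun[OF g(1)] by (auto simp: fun_eq_iff unitS_def Cfun_def)
  then have e: "unitS Tsp = (\<lambda>y. \<rho> (unitS S) y * unitS Tsp y)"
    using rho_mult[OF fa_unit g(1)] g(2) by simp
  show ?thesis
  proof
    fix y show "\<rho> (unitS S) y = unitS Tsp y"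
    proof (cases "y \<in> Tsp")
      case True then show ?thesis using fun_cong[OF e, of y] by (simp add: unitS_def)
    next
      case False then show ?thesis using rho_in[OF fa_unit] by (simp add: unitS_def Cfun_def)
    qed
  qed
qed

lemma rinv_add: "g1 \<in> Cfun Tsp \<Longrightarrow> g2 \<in> Cfun Tsp \<Longrightarrow> rinv (\<lambda>y. g1 y + g2 y) = (\<lambda>x. rinv g1 x + rinv g2 x)"
  by (rule rinv_eq) (auto simp: fa_add rinv_in rho_add rho_rinv)
lemma rinv_cmult: "g \<in> Cfun Tsp \<Longrightarrow> rinv (\<lambda>y. c * g y) = (\<lambda>x. c * rinv g x)"
  by (rule rinv_eq) (auto simp: fa_cmult rinv_in rho_cmult rho_rinv)
lemma rinv_unit: "rinv (unitS Tsp) = unitS S"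
  by (rule rinv_eq[OF fa_unit rho_unit])

lemma rinv_pos:
  assumes g: "g \<in> Cfun Tsp" and p: "\<forall>y\<in>Tsp. Im (g y) = 0 \<and> Re (g y) \<ge> 0"
  shows "Im (rinv g x) = 0 \<and> Re (rinv g x) \<ge> 0"
proof -
  define sk where "sk = (\<lambda>x. complex_of_real (sqrt (Re (g x))))"
  have skC: "sk \<in> Cfun Tsp" unfolding sk_def by (rule Cfun_sqrt[OF g])
  have ge: "g = (\<lambda>x. sk x * cnj (sk x))" unfolding sk_def by (rule Cfun_sq_decomp[OF g p])
  define k where "k = rinv sk"
  have kA: "k \<in> A" unfolding k_def by (rule rinv_in[OF skC])
  have "\<rho> (\<lambda>x. k x * cnj (k x)) = g"
    using rho_mult[OF kA fa_cnj[OF kA]] rho_cnj[OF kA] ge rho_rinv[OF skC] by (simp add: k_def)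
  then have "rinv g = (\<lambda>x. k x * cnj (k x))" by (rule rinv_eq[OF fa_mult[OF kA fa_cnj[OF kA]]])
  then show ?thesis using mult_cnj_pos by simp
qed

end



context erg_iso begin

lemma EA: "h \<in> Cfun S \<Longrightarrow> cond_exp S \<Phi> h \<in> A" by (rule E_fixed)
lemma rhoE: "h \<in> Cfun S \<Longrightarrow> \<rho> (cond_exp S \<Phi> h) \<in> Cfun Tsp" by (rule rho_in[OF EA])

lemma T_state:
  assumes mu: "is_state Tsp \<mu>"
  shows "invariant_state S \<Phi> (\<lambda>h. if h \<in> Cfun S then \<mu> (\<rho> (cond_exp S \<Phi> h)) else 0)"
    (is "invariant_state S \<Phi> ?T")
proof -
  have add: "?T (\<lambda>x. h x + g x) = ?T h + ?T g" if h: "h \<in> Cfun S" and g: "g \<in> Cfun S" for h g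
  proof -
    have "?T (\<lambda>x. h x + g x) = \<mu> (\<rho> (\<lambda>x. cond_exp S \<Phi> h x + cond_exp S \<Phi> g x))"
      using Cfun_add[OF h g] E_add[OF h g] by simp
    also have "\<dots> = \<mu> (\<lambda>y. \<rho> (cond_exp S \<Phi> h) y + \<rho> (cond_exp S \<Phi> g) y)"
      by (simp add: rho_add[OF EA[OF h] EA[OF g]])
    also have "\<dots> = ?T h + ?T g"
      using state_add[OF mu rhoE[OF h] rhoE[OF g]] h g by simp
    finally show ?thesis .
  qed
  have cm: "?T (\<lambda>x. c * h x) = c * ?T h" if h: "h \<in> Cfun S" for h c
  proof -
    have "?T (\<lambda>x. c * h x) = \<mu> (\<rho> (\<lambda>x. c * cond_exp S \<Phi> h x))"
      using Cfun_cmult[OF h] E_cmult[OF h] by simp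
    also have "\<dots> = \<mu> (\<lambda>y. c * \<rho> (cond_exp S \<Phi> h) y)"
      by (simp add: rho_cmult[OF EA[OF h]])
    also have "\<dots> = c * ?T h"
      using state_cmult[OF mu rhoE[OF h]] h by simp
    finally show ?thesis .
  qed
  have pos: "Im (?T h) = 0 \<and> Re (?T h) \<ge> 0"
    if h: "h \<in> Cfun S" and p: "\<forall>x\<in>S. Im (h x) = 0 \<and> Re (h x) \<ge> 0" for h
  proof -
    have "\<forall>x\<in>S. Im (cond_exp S \<Phi> h x) = 0 \<and> Re (cond_exp S \<Phi> h x) \<ge> 0"
      using E_pos[OF h p] by blast
    then have "\<forall>y\<in>Tsp. Im (\<rho> (cond_exp S \<Phi> h) y) = 0 \<and> Re (\<rho> (cond_exp S \<Phi> h) y) \<ge> 0"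
      using rho_pos[OF EA[OF h]] by blast
    then show ?thesis using state_pos[OF mu rhoE[OF h]] h by simp
  qed
  have unit: "?T (unitS S) = 1"
    using Cfun_unit[of S] E_unit rho_unit state_unit[OF mu] by simp
  have inv: "?T (koop S \<Phi> h) = ?T h" if h: "h \<in> Cfun S" for h
    using koop_Cfun[OF h] E_koop[OF h] h by simp
  show ?thesis unfolding invariant_state_def is_state_def
    using add cm pos unit inv by auto
qed

lemma main_loc:
  "let T = (\<lambda>\<mu> h. if h \<in> Cfun S then \<mu> (\<rho> (cond_exp S \<Phi> h)) else 0)
   in affine_states {\<mu>. is_state Tsp \<mu>} T \<and>
      bij_betw T {\<mu>. is_state Tsp \<mu>} {\<phi>. invariant_state S \<Phi> \<phi>}"
  unfolding Let_def
proof (intro conjI)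
  define T where "T = (\<lambda>\<mu> h. if h \<in> Cfun S then \<mu> (\<rho> (cond_exp S \<Phi> h)) else (0::complex))"
  show "affine_states {\<mu>. is_state Tsp \<mu>} (\<lambda>\<mu> h. if h \<in> Cfun S then \<mu> (\<rho> (cond_exp S \<Phi> h)) else 0)"
    by (auto simp: affine_states_def fun_eq_iff)
  have inj: "inj_on T {\<mu>. is_state Tsp \<mu>}"
  proof (rule inj_onI)
    fix \<mu> \<nu> assume mu: "\<mu> \<in> {\<mu>. is_state Tsp \<mu>}" and nu: "\<nu> \<in> {\<mu>. is_state Tsp \<mu>}" and eq: "T \<mu> = T \<nu>"
    show "\<mu> = \<nu>"
    proof
      fix g show "\<mu> g = \<nu> g"
      proof (cases "g \<in> Cfun Tsp")
        case True
        define k where "k = rinv g"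
        have kA: "k \<in> A" unfolding k_def by (rule rinv_in[OF True])
        have "T \<mu> k = \<mu> g" "T \<nu> k = \<nu> g"
          using fa_Cfun[OF kA] E_fix[OF kA] rho_rinv[OF True] by (auto simp: T_def k_def)
        then show ?thesis using eq by metis
      next
        case False then show ?thesis using mu nu by (simp add: state_out)
      qed
    qed
  qed
  have img: "T ` {\<mu>. is_state Tsp \<mu>} = {\<phi>. invariant_state S \<Phi> \<phi>}"
  proof
    show "T ` {\<mu>. is_state Tsp \<mu>} \<subseteq> {\<phi>. invariant_state S \<Phi> \<phi>}"
      using T_state unfolding T_def by blast
    show "{\<phi>. invariant_state S \<Phi> \<phi>} \<subseteq> T ` {\<mu>. is_state Tsp \<mu>}"
    proof
      fix \<phi> assume "\<phi> \<in> {\<phi>. invariant_state S \<Phi> \<phi>}"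
      then have ph: "invariant_state S \<Phi> \<phi>" by simp
      then have phs: "is_state S \<phi>" by (simp add: invariant_state_def)
      define \<mu> where "\<mu> = (\<lambda>g. if g \<in> Cfun Tsp then \<phi> (rinv g) else 0)"
      have ms: "is_state Tsp \<mu>"
        unfolding is_state_def
      proof (intro conjI ballI allI impI)
        fix h assume "h \<notin> Cfun Tsp" then show "\<mu> h = 0" by (simp add: \<mu>_def)
      next
        fix h g assume h: "h \<in> Cfun Tsp" and g: "g \<in> Cfun Tsp"
        show "\<mu> (\<lambda>x. h x + g x) = \<mu> h + \<mu> g"
          using Cfun_add[OF h g] rinv_add[OF h g] h g
            state_add[OF phs fa_Cfun[OF rinv_in[OF h]] fa_Cfun[OF rinv_in[OF g]]]
          by (simp add: \<mu>_def)
      next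
        fix c h assume h: "h \<in> Cfun Tsp"
        show "\<mu> (\<lambda>x. c * h x) = c * \<mu> h"
          using Cfun_cmult[OF h] rinv_cmult[OF h] h
            state_cmult[OF phs fa_Cfun[OF rinv_in[OF h]]]
          by (simp add: \<mu>_def)
      next
        fix h assume h: "h \<in> Cfun Tsp" and p: "\<forall>x\<in>Tsp. Im (h x) = 0 \<and> 0 \<le> Re (h x)"
        have "\<forall>x\<in>S. Im (rinv h x) = 0 \<and> 0 \<le> Re (rinv h x)" using rinv_pos[OF h p] by blast
        then have "Im (\<phi> (rinv h)) = 0 \<and> 0 \<le> Re (\<phi> (rinv h))"
          by (rule state_pos[OF phs fa_Cfun[OF rinv_in[OF h]]])
        then show "Im (\<mu> h) = 0" "0 \<le> Re (\<mu> h)" using h by (auto simp: \<mu>_def)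
      next
        show "\<mu> (unitS Tsp) = 1"
          using Cfun_unit[of Tsp] rinv_unit state_unit[OF phs] by (simp add: \<mu>_def)
      qed
      have "T \<mu> = \<phi>"
      proof
        fix h show "T \<mu> h = \<phi> h"
        proof (cases "h \<in> Cfun S")
          case True
          then show ?thesis
            using rhoE[OF True] rinv_rho[OF EA[OF True]] E_state[OF ph True]
            by (simp add: T_def \<mu>_def)
        next
          case False then show ?thesis using phs by (simp add: T_def state_out)
        qed
      qed
      then show "\<phi> \<in> T ` {\<mu>. is_state Tsp \<mu>}" using ms by blast
    qed
  qed
  show "bij_betw (\<lambda>\<mu> h. if h \<in> Cfun S then \<mu> (\<rho> (cond_exp S \<Phi> h)) else 0) {\<mu>. is_state Tsp \<mu>} {\<phi>. invariant_state S \<Phi> \<phi>}"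
    using inj img unfolding bij_betw_def T_def by simp
qed

end



theorem mainTheorem19:
  fixes \<theta> :: "'a::t2_space \<Rightarrow> 'a" and f :: "'a \<Rightarrow> complex"
    and \<rho> :: "('a \<times> complex \<Rightarrow> complex) \<Rightarrow> (complex \<Rightarrow> complex)"
  assumes cpt: "compact (UNIV :: 'a set)"
    and homeo: "\<exists>\<theta>'. homeomorphism UNIV UNIV \<theta> \<theta>'"
    and ue: "uniquely_ergodic (UNIV :: 'a set) \<theta>"
    and f_cont: "continuous_on UNIV f"
    and f_circ: "\<forall>x. f x \<in> sphere 0 1"
    and ue_fix: "UE_fixed (UNIV \<times> sphere 0 1) (\<lambda>(x, w). (\<theta> x, f x * w))"
    and nontriv: "\<exists>h\<in>fixed_alg (UNIV \<times> sphere 0 1) (\<lambda>(x, w). (\<theta> x, f x * w)).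
                    \<exists>p\<in>UNIV \<times> sphere 0 1. \<exists>q\<in>UNIV \<times> sphere 0 1. h p \<noteq> h q"
    and iso: "star_iso (fixed_alg (UNIV \<times> sphere 0 1) (\<lambda>(x, w). (\<theta> x, f x * w)))
                (Cfun (sphere 0 1)) \<rho>"
  shows "let S = UNIV \<times> sphere (0::complex) 1;
             \<Phi> = (\<lambda>(x, w). (\<theta> x, f x * w));
             T = (\<lambda>\<mu> h. if h \<in> Cfun S then \<mu> (\<rho> (cond_exp S \<Phi> h)) else 0)
         in affine_states {\<mu>. is_state (sphere 0 1) \<mu>} T \<and>
            bij_betw T {\<mu>. is_state (sphere 0 1) \<mu>} {\<phi>. invariant_state S \<Phi> \<phi>}"
proof -
  define S where "S = (UNIV :: 'a set) \<times> sphere (0::complex) 1"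
  define \<Phi> where "\<Phi> = (\<lambda>(x::'a, w::complex). (\<theta> x, f x * w))"
  have thc: "continuous_on UNIV \<theta>" using homeo by (auto simp: homeomorphism_def)
  have Peq: "\<Phi> = (\<lambda>p. (\<theta> (fst p), f (fst p) * snd p))" by (auto simp: \<Phi>_def fun_eq_iff)
  have cP: "continuous_on UNIV \<Phi>"
    unfolding Peq
    by (intro continuous_intros continuous_on_compose2[OF thc] continuous_on_compose2[OF f_cont]) auto
  interpret erg_iso S \<Phi> "sphere 0 1" \<rho>
  proof
    show "compact S" unfolding S_def by (intro compact_Times cpt compact_sphere)
    show "continuous_on S \<Phi>" by (rule continuous_on_subset[OF cP]) auto
    show "\<And>x. x \<in> S \<Longrightarrow> \<Phi> x \<in> S"
      using f_circ by (auto simp: S_def \<Phi>_def norm_mult)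
    show "UE_fixed S \<Phi>" using ue_fix by (simp add: S_def \<Phi>_def)
    show "star_iso (fixed_alg S \<Phi>) (Cfun (sphere 0 1)) \<rho>" using iso by (simp add: S_def \<Phi>_def)
  qed
  show ?thesis using main_loc unfolding S_def \<Phi>_def Let_def .
qed


end
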